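(* Let $x=(x_1,\dots,x_m)$ and let $y=(y_1,y_2,\dots)$ be a countably infinite alphabet. With $\epsilon_{a,t}$ acting on the $y$-variables, \[\epsilon_{ut^{m-1},t}\bigl(F(u;x,y;t)\bigr)=\prod_{i=1}^m\frac{1-ut^{m-i}}{1-ut^{m-1}x_i}\] and \[\epsilon_{a,t}\bigl(F(1;x,y;t)\bigr)=t^{\binom m2}x_1\cdots x_m\prod_{i=1}^m\frac{1-at^{1-i}}{1-ax_i}.\]
   Context: For $x=(x_1,\dots,x_m)$ and infinite $y$, \[F(u;x,y;t)=\sum_{I\subseteq\{1,\dots,m\}}(-u)^{|I|}t^{\binom{|I|}{2}}\prod_{i\in I,\ j\in\{1,\dots,m\}\setminus I}\frac{tx_i-x_j}{x_i-x_j}\prod_{i\in I}\prod_{j\ge1}\frac{1-x_iy_j}{1-tx_iy_j},\] where $\prod_{j\ge1}\frac{1-zy_j}{1-tzy_j}=\exp\bigl(-\sum_{r\ge1}(1-t^r)z^rp_r(y)/r\bigr)$ is a formal power series in $z$ whose coefficients are symmetric functions of $y$, $p_r(y)=\sum_j y_j^r$ being the power sums. The specialization $\epsilon_{a,t}$ is the ring homomorphism from symmetric functions in $y$ (over the field of rational functions in the parameters) defined by $\epsilon_{a,t}(p_r)=(1-a^r)/(1-t^r)$, applied coefficientwise; the identities are understood as identities of rational functions / their power series expansions. *)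

theory Defs
  imports "HOL-Analysis.Analysis"
begin

text \<open>The specialization epsilon_{a,t} on power sums: p_r |-> (1 - a^r)/(1 - t^r).\<close>
definition eps_p :: "complex \<Rightarrow> complex \<Rightarrow> nat \<Rightarrow> complex" where
  "eps_p a t r = (1 - a ^ r) / (1 - t ^ r)"

text \<open>epsilon_{a,t} applied coefficientwise to
  prod_j (1 - z y_j)/(1 - t z y_j) = exp(- sum_{r>=1} (1 - t^r) z^r p_r(y) / r),
  realised as the (convergent, for |z| < 1 and |a z| < 1) power series in z.\<close>
definition H_spec :: "complex \<Rightarrow> complex \<Rightarrow> complex \<Rightarrow> complex" where
  "H_spec a t z =
     exp (- (\<Sum>k. (1 - t ^ Suc k) * z ^ Suc k * eps_p a t (Suc k) / of_nat (Suc k)))"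

definition F_spec :: "complex \<Rightarrow> complex \<Rightarrow> complex \<Rightarrow> nat \<Rightarrow> (nat \<Rightarrow> complex) \<Rightarrow> complex" where
  "F_spec a t u m x =
     (\<Sum>I\<in>Pow {1..m}.
        (- u) ^ card I * t ^ (card I choose 2)
        * (\<Prod>i\<in>I. \<Prod>j\<in>{1..m} - I. (t * x i - x j) / (x i - x j))
        * (\<Prod>i\<in>I. H_spec a t (x i)))"

end

theory Submission
  imports Defs "Jordan_Normal_Form.Determinant"
begin

lemma H_spec_eq:
  fixes a t z :: complex
  assumes tg: "\<And>r. r \<ge> 1 \<Longrightarrow> t ^ r \<noteq> 1" and z: "norm z < 1" and az: "norm (a*z) < 1"
  shows "H_spec a t z = (1 - z) / (1 - a * z)"
proof -
  have s1: "(\<lambda>n. - (z^n) / of_nat n) sums ln (1 - z)"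
    using Ln_series'[of "-z"] z by simp
  have s2: "(\<lambda>n. - ((a*z)^n) / of_nat n) sums ln (1 - a*z)"
    using Ln_series'[of "-(a*z)"] az by simp
  have s3: "(\<lambda>n. - (z^n) / of_nat n - - ((a*z)^n) / of_nat n) sums (ln (1 - z) - ln (1 - a*z))"
    using sums_diff[OF s1 s2] .
  have s4: "(\<lambda>k. - (z^Suc k) / of_nat (Suc k) - - ((a*z)^Suc k) / of_nat (Suc k)) sums (ln (1 - z) - ln (1 - a*z))"
    using s3 sums_Suc_iff[where f="\<lambda>n. - (z^n) / of_nat n - - ((a*z)^n) / of_nat n"] by simp
  have eq: "(1 - t ^ Suc k) * z ^ Suc k * eps_p a t (Suc k) / of_nat (Suc k)
      = - (- (z^Suc k) / of_nat (Suc k) - - ((a*z)^Suc k) / of_nat (Suc k))" for k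
  proof -
    have "1 - t ^ Suc k \<noteq> 0" using tg[of "Suc k"] by simp
    then have c: "(1 - t ^ Suc k) * eps_p a t (Suc k) = 1 - a ^ Suc k" unfolding eps_p_def by simp
    have "(1 - t ^ Suc k) * z ^ Suc k * eps_p a t (Suc k) / of_nat (Suc k)
       = ((1 - t ^ Suc k) * eps_p a t (Suc k)) * z ^ Suc k / of_nat (Suc k)" by (simp add: ac_simps)
    also have "\<dots> = (1 - a ^ Suc k) * z ^ Suc k / of_nat (Suc k)" using c by simp
    also have "\<dots> = - (- (z^Suc k) / of_nat (Suc k) - - ((a*z)^Suc k) / of_nat (Suc k))"
      by (simp add: power_mult_distrib diff_divide_distrib algebra_simps del: of_nat_Suc)
    finally show ?thesis .
  qed
  have "(\<lambda>k. (1 - t ^ Suc k) * z ^ Suc k * eps_p a t (Suc k) / of_nat (Suc k)) sums (- (ln (1 - z) - ln (1 - a*z)))"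
    unfolding eq by (rule sums_minus[OF s4])
  then have "(\<Sum>k. (1 - t ^ Suc k) * z ^ Suc k * eps_p a t (Suc k) / of_nat (Suc k)) = - (ln (1 - z) - ln (1 - a*z))"
    by (rule sums_unique[symmetric])
  then have "H_spec a t z = exp (ln (1 - z) - ln (1 - a*z))" unfolding H_spec_def by simp
  also have "\<dots> = (1 - z) / (1 - a*z)"
  proof -
    have "1 - z \<noteq> 0" using z by auto
    moreover have "1 - a*z \<noteq> 0" using az by auto
    ultimately show ?thesis by (simp add: exp_diff)
  qed
  finally show ?thesis .
qed

definition vdm :: "nat \<Rightarrow> (nat \<Rightarrow> 'a::comm_ring_1) \<Rightarrow> 'a" where
  "vdm n y = (\<Prod>i<n. \<Prod>j<i. (y i - y j))"

lemma bidiag_sum: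
  fixes f :: "nat \<Rightarrow> 'a::comm_ring_1"
  assumes "k < n"
  shows "(\<Sum>l<n. f l * (if l = k then d else if Suc l = k then e else 0))
         = f k * d + (if k > 0 then f (k - 1) * e else 0)"
proof -
  have "(\<Sum>l<n. f l * (if l = k then d else if Suc l = k then e else 0))
      = (\<Sum>l<n. (if l = k then f l * d else 0)) + (\<Sum>l<n. (if Suc l = k then f l * e else 0))"
    by (subst sum.distrib[symmetric]) (rule sum.cong, auto)
  also have "(\<Sum>l<n. (if l = k then f l * d else 0)) = f k * d" using assms by simp
  also have "(\<Sum>l<n. (if Suc l = k then f l * e else 0)) = (if k > 0 then f (k - 1) * e else 0)"
  proof (cases k)
    case 0 then show ?thesis by simp
  next
    case (Suc k') 
    have "(\<Sum>l<n. (if Suc l = k then f l * e else 0)) = (\<Sum>l<n. (if l = k' then f l * e else 0))"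
      using Suc by (intro sum.cong) auto
    also have "\<dots> = f k' * e" using assms Suc by simp
    finally show ?thesis using Suc by simp
  qed
  finally show ?thesis .
qed

lemma prod_list_map_one: "prod_list (map (\<lambda>i. 1::'a::monoid_mult) xs) = 1"
  by (induct xs) auto

lemma vandermonde:
  fixes y :: "nat \<Rightarrow> 'a::comm_ring_1"
  shows "det (mat n n (\<lambda>(i,k). y i ^ k)) = vdm n y"
proof (induction n)
  case 0
  then show ?case by (simp add: vdm_def)
next
  case (Suc n)
  define c where "c = y n"
  define M where "M = mat (Suc n) (Suc n) (\<lambda>(i,k). y i ^ k)"
  define B :: "'a mat" where "B = mat (Suc n) (Suc n) (\<lambda>(l,k). if l = k then 1 else if Suc l = k then - c else 0)"
  have Mc: "M \<in> carrier_mat (Suc n) (Suc n)" and Bc: "B \<in> carrier_mat (Suc n) (Suc n)"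
    unfolding M_def B_def by auto
  have detB: "det B = 1"
  proof -
    have "upper_triangular B" unfolding B_def upper_triangular_def by auto
    then have "det B = prod_list (diag_mat B)" using det_upper_triangular Bc by blast
    also have "diag_mat B = map (\<lambda>i. 1) [0..<Suc n]" unfolding B_def diag_mat_def
      by (rule map_cong) (auto simp del: upt_Suc)
    finally show ?thesis by (simp only: prod_list_map_one)
  qed
  define MB where "MB = mat (Suc n) (Suc n) (\<lambda>(i,k). if k = 0 then 1 else y i ^ k - c * y i ^ (k - 1))"
  have MBeq: "M * B = MB"
  proof (rule eq_matI)
    fix i k assume i: "i < dim_row MB" and k: "k < dim_col MB"
    then have i': "i < Suc n" and k': "k < Suc n" unfolding MB_def by auto
    have "(M * B) $$ (i, k) = (\<Sum>l<Suc n. y i ^ l * (if l = k then 1 else if Suc l = k then - c else 0))"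
      using i' k' unfolding M_def B_def times_mat_def scalar_prod_def
      by (simp add: lessThan_atLeast0)
    also have "\<dots> = MB $$ (i, k)" using i' k' unfolding MB_def
      by (subst bidiag_sum) (auto simp: algebra_simps)
    finally show "(M * B) $$ (i, k) = MB $$ (i, k)" .
  qed (auto simp: M_def B_def MB_def)
  have MBc: "MB \<in> carrier_mat (Suc n) (Suc n)" unfolding MB_def by auto
  have "det M = det MB" using det_mult[OF Mc Bc] detB MBeq by simp
  also have "det MB = (\<Sum>j<Suc n. MB $$ (n, j) * cofactor MB n j)"
    using laplace_expansion_row[OF MBc, of n] by simp
  also have "\<dots> = MB $$ (n, 0) * cofactor MB n 0"
  proof -
    have "\<And>j. j < Suc n \<Longrightarrow> j \<noteq> 0 \<Longrightarrow> MB $$ (n, j) = 0"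
      unfolding MB_def c_def by (auto simp: power_eq_if)
    then show ?thesis by (subst sum.remove[of _ 0]) (auto intro!: sum.neutral)
  qed
  also have "\<dots> = (-1) ^ n * det (mat_delete MB n 0)"
    unfolding cofactor_def MB_def by simp
  also have "mat_delete MB n 0 = mat\<^sub>r n n (\<lambda>i. (y i - c) \<cdot>\<^sub>v vec n (\<lambda>j. y i ^ j))"
    unfolding mat_delete_def MB_def
    by (rule eq_matI) (auto simp: algebra_simps)
  also have "det \<dots> = prod (\<lambda>i. y i - c) {0..<n} * det (mat\<^sub>r n n (\<lambda>i. vec n (\<lambda>j. y i ^ j)))"
    by (rule det_rows_mul) auto
  also have "mat\<^sub>r n n (\<lambda>i. vec n (\<lambda>j. y i ^ j)) = mat n n (\<lambda>(i,k). y i ^ k)"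
    by (rule eq_matI) auto
  finally have "det M = (-1) ^ n * (prod (\<lambda>i. y i - c) {0..<n} * vdm n y)" using Suc by simp
  also have "\<dots> = (\<Prod>j<n. (y n - y j)) * vdm n y"
  proof -
    have "(\<Prod>j<n. - (y j - c)) = (\<Prod>j<n. (-1) * (y j - c))" by simp
    also have "\<dots> = (-1) ^ n * prod (\<lambda>i. y i - c) {0..<n}"
      by (simp only: prod.distrib prod_constant card_lessThan lessThan_atLeast0 card_atLeastLessThan diff_zero)
    finally have "(-1) ^ n * prod (\<lambda>i. y i - c) {0..<n} = (\<Prod>j<n. - (y j - c))" by simp
    then have "(-1) ^ n * (prod (\<lambda>i. y i - c) {0..<n} * vdm n y) = (\<Prod>j<n. - (y j - c)) * vdm n y"
      by (simp only: mult.assoc[symmetric])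
    then show ?thesis unfolding c_def by simp
  qed
  finally show ?case unfolding M_def vdm_def by (simp add: mult.commute)
qed


lemma det_two_point:
  fixes z w c :: "nat \<Rightarrow> 'a::comm_ring_1"
  shows "det (mat n n (\<lambda>(i,k). z i ^ k + c i * w i ^ k))
    = (\<Sum>J\<in>Pow {0..<n}. (\<Prod>i\<in>J. c i) * vdm n (\<lambda>i. if i \<in> J then w i else z i))"
proof -
  let ?P = "{p. p permutes {0..<n}}"
  let ?y = "\<lambda>J i. if i \<in> J then w i else z i"
  have A: "mat n n (\<lambda>(i,k). z i ^ k + c i * w i ^ k) \<in> carrier_mat n n" by auto
  have "det (mat n n (\<lambda>(i,k). z i ^ k + c i * w i ^ k))
     = (\<Sum>p\<in>?P. signof p * (\<Prod>i=0..<n. c i * w i ^ p i + z i ^ p i))"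
    unfolding det_def'[OF A]
    by (intro sum.cong refl arg_cong2[where f="(*)"] prod.cong) (auto simp: permutes_def add.commute)
  also have "\<dots> = (\<Sum>p\<in>?P. \<Sum>J\<in>Pow {0..<n}. signof p * ((\<Prod>i\<in>J. c i * w i ^ p i) * (\<Prod>i\<in>{0..<n}-J. z i ^ p i)))"
    by (simp add: prod_add sum_distrib_left)
  also have "\<dots> = (\<Sum>J\<in>Pow {0..<n}. \<Sum>p\<in>?P. signof p * ((\<Prod>i\<in>J. c i * w i ^ p i) * (\<Prod>i\<in>{0..<n}-J. z i ^ p i)))"
    by (rule sum.swap)
  also have "\<dots> = (\<Sum>J\<in>Pow {0..<n}. (\<Prod>i\<in>J. c i) * (\<Sum>p\<in>?P. signof p * (\<Prod>i=0..<n. ?y J i ^ p i)))"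
  proof (rule sum.cong[OF refl])
    fix J assume J: "J \<in> Pow {0..<n}"
    have "\<And>p. (\<Prod>i=0..<n. ?y J i ^ p i) = (\<Prod>i\<in>J. w i ^ p i) * (\<Prod>i\<in>{0..<n}-J. z i ^ p i)"
    proof -
      fix p
      have "(\<Prod>i=0..<n. ?y J i ^ p i) = (\<Prod>i=0..<n. if i \<in> J then w i ^ p i else z i ^ p i)"
        by (intro prod.cong) auto
      also have "\<dots> = (\<Prod>i\<in>{0..<n} \<inter> {i. i \<in> J}. w i ^ p i) * (\<Prod>i\<in>{0..<n} \<inter> - {i. i \<in> J}. z i ^ p i)"
        by (rule prod.If_cases) simp
      also have "{0..<n} \<inter> {i. i \<in> J} = J" using J by auto
      also have "{0..<n} \<inter> - {i. i \<in> J} = {0..<n} - J" by auto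
      finally show "?thesis p" .
    qed
    then show "(\<Sum>p\<in>?P. signof p * ((\<Prod>i\<in>J. c i * w i ^ p i) * (\<Prod>i\<in>{0..<n}-J. z i ^ p i)))
      = (\<Prod>i\<in>J. c i) * (\<Sum>p\<in>?P. signof p * (\<Prod>i=0..<n. ?y J i ^ p i))"
      by (simp add: sum_distrib_left prod.distrib ac_simps)
  qed
  also have "\<dots> = (\<Sum>J\<in>Pow {0..<n}. (\<Prod>i\<in>J. c i) * vdm n (?y J))"
  proof (rule sum.cong[OF refl])
    fix J
    have B: "mat n n (\<lambda>(i,k). ?y J i ^ k) \<in> carrier_mat n n" by auto
    have "(\<Sum>p\<in>?P. signof p * (\<Prod>i=0..<n. ?y J i ^ p i)) = det (mat n n (\<lambda>(i,k). ?y J i ^ k))"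
      unfolding det_def'[OF B]
      by (intro sum.cong refl arg_cong2[where f="(*)"] prod.cong) (auto simp: permutes_def)
    then show "(\<Prod>i\<in>J. c i) * (\<Sum>p\<in>?P. signof p * (\<Prod>i=0..<n. ?y J i ^ p i)) = (\<Prod>i\<in>J. c i) * vdm n (?y J)"
      by (simp add: vandermonde)
  qed
  finally show ?thesis .
qed


lemma choose2_Suc: "Suc k choose 2 = (k choose 2) + k"
  by (simp add: numeral_2_eq_2)

lemma prod_T:
  fixes t :: "'a::comm_monoid_mult" and n :: nat and J :: "nat set"
  shows "(\<Prod>i<n. \<Prod>j<i. (if i \<in> J \<and> j \<in> J then t else 1)) = t ^ (card (J \<inter> {..<n}) choose 2)"
proof (induction n)
  case 0 then show ?case by (simp add: numeral_2_eq_2)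
next
  case (Suc n)
  have inner: "(\<Prod>j<n. (if n \<in> J \<and> j \<in> J then t else 1)) = (if n \<in> J then t ^ card (J \<inter> {..<n}) else 1)"
  proof (cases "n \<in> J")
    case True
    have "(\<Prod>j<n. (if n \<in> J \<and> j \<in> J then t else 1)) = (\<Prod>j<n. (if j \<in> J then t else 1))"
      using True by simp
    also have "\<dots> = prod (\<lambda>_. t) {j \<in> {..<n}. j \<in> J}"
      by (rule prod.inter_filter[symmetric]) simp
    also have "{j \<in> {..<n}. j \<in> J} = J \<inter> {..<n}" by auto
    finally show ?thesis using True by simp
  qed simp
  have card: "n \<in> J \<Longrightarrow> card (J \<inter> {..<Suc n}) = Suc (card (J \<inter> {..<n}))"
  proof -
    assume "n \<in> J"
    then have "J \<inter> {..<Suc n} = insert n (J \<inter> {..<n})" by auto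
    then show ?thesis by simp
  qed
  have card2: "n \<notin> J \<Longrightarrow> J \<inter> {..<Suc n} = J \<inter> {..<n}" by (auto simp: less_Suc_eq)
  show ?case
  proof (cases "n \<in> J")
    case True
    then show ?thesis using Suc inner card[OF True]
      by (simp add: power_add[symmetric] choose2_Suc) 
  next
    case False
    then show ?thesis using Suc inner card2[OF False] by simp
  qed
qed


lemma prod_R:
  fixes R :: "nat \<Rightarrow> nat \<Rightarrow> 'a::comm_monoid_mult"
  assumes diag: "\<And>i. R i i = 1"
  shows "(\<Prod>i<n. \<Prod>j<i. R i j) * (\<Prod>i<n. \<Prod>j<i. R j i) = (\<Prod>i<n. \<Prod>j<n. R i j)"
proof (induction n)
  case 0 then show ?case by simp
next
  case (Suc n)
  have "(\<Prod>i<Suc n. \<Prod>j<Suc n. R i j) = (\<Prod>i<n. (\<Prod>j<n. R i j) * R i n) * ((\<Prod>j<n. R n j) * R n n)"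
    by simp
  also have "\<dots> = (\<Prod>i<n. \<Prod>j<n. R i j) * (\<Prod>i<n. R i n) * (\<Prod>j<n. R n j)"
    by (simp add: prod.distrib diag)
  finally show ?case using Suc[symmetric] by (simp add: prod.distrib ac_simps)
qed

lemma vdm_shift:
  fixes z :: "nat \<Rightarrow> 'a::field" and t :: 'a
  assumes J: "J \<subseteq> {0..<n}" and inj: "inj_on z {0..<n}"
  shows "vdm n (\<lambda>i. if i \<in> J then t * z i else z i)
    = t ^ (card J choose 2) * (\<Prod>i\<in>J. \<Prod>j\<in>{0..<n}-J. (t * z i - z j) / (z i - z j)) * vdm n z"
proof -
  define T where "T i j = (if i \<in> J \<and> j \<in> J then t else 1)" for i j
  define R where "R i j = (if i \<in> J \<and> j \<notin> J then (t * z i - z j) / (z i - z j) else 1)" for i j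
  let ?y = "\<lambda>i. if i \<in> J then t * z i else z i"
  have fac: "?y i - ?y j = (z i - z j) * T i j * (R i j * R j i)" if ji: "j < i" "i < n" for i j
  proof -
    have "z i \<noteq> z j" using inj ji by (auto dest: inj_onD)
    then have ne: "z i - z j \<noteq> 0" "z j - z i \<noteq> 0" by auto
    show ?thesis unfolding T_def R_def using ji ne
      by (auto simp: field_simps)
  qed
  have "vdm n ?y = (\<Prod>i<n. \<Prod>j<i. (z i - z j) * T i j * (R i j * R j i))"
    unfolding vdm_def by (intro prod.cong refl) (auto simp: fac)
  also have "\<dots> = vdm n z * (\<Prod>i<n. \<Prod>j<i. T i j) * ((\<Prod>i<n. \<Prod>j<i. R i j) * (\<Prod>i<n. \<Prod>j<i. R j i))"
    unfolding vdm_def by (simp add: prod.distrib)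
  also have "(\<Prod>i<n. \<Prod>j<i. T i j) = t ^ (card J choose 2)"
  proof -
    have "J \<inter> {..<n} = J" using J by auto
    then show ?thesis unfolding T_def using prod_T[where t=t and n=n and J=J] by simp
  qed
  also have "(\<Prod>i<n. \<Prod>j<i. R i j) * (\<Prod>i<n. \<Prod>j<i. R j i) = (\<Prod>i<n. \<Prod>j<n. R i j)"
    by (rule prod_R) (simp add: R_def)
  also have "\<dots> = (\<Prod>i\<in>J. \<Prod>j\<in>{0..<n}-J. (t * z i - z j) / (z i - z j))"
  proof -
    have "(\<Prod>i<n. \<Prod>j<n. R i j) = (\<Prod>i<n. if i \<in> J then (\<Prod>j\<in>{0..<n}-J. (t * z i - z j) / (z i - z j)) else 1)"
    proof (intro prod.cong refl)
      fix i assume "i \<in> {..<n}"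
      show "(\<Prod>j<n. R i j) = (if i \<in> J then (\<Prod>j\<in>{0..<n}-J. (t * z i - z j) / (z i - z j)) else 1)"
      proof (cases "i \<in> J")
        case True
        have "(\<Prod>j<n. R i j) = (\<Prod>j<n. if j \<notin> J then (t * z i - z j) / (z i - z j) else 1)"
          unfolding R_def using True by simp
        also have "\<dots> = (\<Prod>j\<in>{j \<in> {..<n}. j \<notin> J}. (t * z i - z j) / (z i - z j))"
          by (rule prod.inter_filter[symmetric]) simp
        also have "{j \<in> {..<n}. j \<notin> J} = {0..<n} - J" by auto
        finally show ?thesis using True by simp
      qed (simp add: R_def)
    qed
    also have "\<dots> = (\<Prod>i\<in>{i \<in> {..<n}. i \<in> J}. \<Prod>j\<in>{0..<n}-J. (t * z i - z j) / (z i - z j))"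
      by (rule prod.inter_filter[symmetric]) simp
    also have "{i \<in> {..<n}. i \<in> J} = J" using J by auto
    finally show ?thesis .
  qed
  finally show ?thesis by (simp add: ac_simps)
qed


lemma lower_bidiag_sum:
  fixes f :: "nat \<Rightarrow> 'a::comm_ring_1"
  assumes "k < n"
  shows "(\<Sum>l<n. f l * (if l = k then d else if l = Suc k then e else 0))
         = f k * d + (if Suc k < n then f (Suc k) * e else 0)"
proof -
  have "(\<Sum>l<n. f l * (if l = k then d else if l = Suc k then e else 0))
      = (\<Sum>l<n. (if l = k then f l * d else 0)) + (\<Sum>l<n. (if l = Suc k then f l * e else 0))"
    by (subst sum.distrib[symmetric]) (rule sum.cong, auto)
  also have "(\<Sum>l<n. (if l = k then f l * d else 0)) = f k * d" using assms by simp
  also have "(\<Sum>l<n. (if l = Suc k then f l * e else 0)) = (if Suc k < n then f (Suc k) * e else 0)"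
    by simp
  finally show ?thesis .
qed

definition Acoef :: "'a::field \<Rightarrow> nat \<Rightarrow> (nat \<Rightarrow> 'a) \<Rightarrow> nat set \<Rightarrow> 'a" where
  "Acoef t n z J = (\<Prod>i\<in>J. \<Prod>j\<in>{0..<n}-J. (t * z i - z j) / (z i - z j))"

lemma main0:
  fixes z c d :: "nat \<Rightarrow> 'a::field" and t :: 'a and C :: "'a mat"
  assumes inj: "inj_on z {0..<n}" and Cc: "C \<in> carrier_mat n n"
    and ent: "\<And>i k. i < n \<Longrightarrow> k < n \<Longrightarrow> d i * (\<Sum>l<n. z i ^ l * C $$ (l, k)) = z i ^ k + c i * (t * z i) ^ k"
  shows "(\<Sum>J\<in>Pow {0..<n}. (\<Prod>i\<in>J. c i) * t ^ (card J choose 2) * Acoef t n z J) = (\<Prod>i<n. d i) * det C"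
proof -
  define D where "D = mat n n (\<lambda>(i,k). if i = k then d i else 0)"
  define X where "X = mat n n (\<lambda>(i,k). z i ^ k)"
  have Dc: "D \<in> carrier_mat n n" and Xc: "X \<in> carrier_mat n n" unfolding D_def X_def by auto
  have detD: "det D = (\<Prod>i<n. d i)"
  proof -
    have "upper_triangular D" unfolding D_def upper_triangular_def by auto
    then have "det D = prod_list (diag_mat D)" using det_upper_triangular Dc by blast
    also have "diag_mat D = map d [0..<n]" unfolding D_def diag_mat_def
      by (rule map_cong) auto
    also have "prod_list (map d [0..<n]) = prod d (set [0..<n])"
      by (rule prod.distinct_set_conv_list[symmetric]) simp
    finally show ?thesis by (simp add: lessThan_atLeast0)
  qed
  have detX: "det X = vdm n z" unfolding X_def by (rule vandermonde)
  have prodeq: "D * X * C = mat n n (\<lambda>(i,k). z i ^ k + c i * (t * z i) ^ k)"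
  proof (rule eq_matI)
    fix i k assume i: "i < dim_row (mat n n (\<lambda>(i,k). z i ^ k + c i * (t * z i) ^ k))"
      and k: "k < dim_col (mat n n (\<lambda>(i,k). z i ^ k + c i * (t * z i) ^ k))"
    then have i': "i < n" and k': "k < n" by auto
    have DX: "D * X = mat n n (\<lambda>(i,k). d i * z i ^ k)"
    proof (rule eq_matI)
      fix i k assume "i < dim_row (mat n n (\<lambda>(i,k). d i * z i ^ k))" "k < dim_col (mat n n (\<lambda>(i,k). d i * z i ^ k))"
      then have i: "i < n" and k: "k < n" by auto
      have "(D * X) $$ (i, k) = (\<Sum>l\<in>{0..<n}. (if i = l then d i else 0) * z l ^ k)"
        using i k unfolding D_def X_def times_mat_def scalar_prod_def by simp
      also have "\<dots> = (\<Sum>l\<in>{0..<n}. if l = i then d i * z i ^ k else 0)"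
        by (rule sum.cong) auto
      also have "\<dots> = d i * z i ^ k" using i by simp
      finally show "(D * X) $$ (i, k) = mat n n (\<lambda>(i,k). d i * z i ^ k) $$ (i, k)" using i k by simp
    qed (auto simp: D_def X_def)
    have "(D * X * C) $$ (i, k) = (\<Sum>l\<in>{0..<n}. d i * z i ^ l * C $$ (l, k))"
      using i' k' Cc by (simp add: DX scalar_prod_def)
    also have "\<dots> = d i * (\<Sum>l<n. z i ^ l * C $$ (l, k))"
      by (simp add: sum_distrib_left lessThan_atLeast0 mult.assoc)
    also have "\<dots> = z i ^ k + c i * (t * z i) ^ k" using ent i' k' by simp
    finally show "(D * X * C) $$ (i, k) = mat n n (\<lambda>(i,k). z i ^ k + c i * (t * z i) ^ k) $$ (i, k)"
      using i' k' by simp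
  qed (use Cc in \<open>auto simp: D_def X_def\<close>)
  have E1: "det (mat n n (\<lambda>(i,k). z i ^ k + c i * (t * z i) ^ k)) = (\<Prod>i<n. d i) * vdm n z * det C"
    unfolding prodeq[symmetric] using det_mult[OF mult_carrier_mat[OF Dc Xc] Cc] det_mult[OF Dc Xc] detD detX
    by simp
  have E2: "det (mat n n (\<lambda>(i,k). z i ^ k + c i * (t * z i) ^ k))
      = vdm n z * (\<Sum>J\<in>Pow {0..<n}. (\<Prod>i\<in>J. c i) * t ^ (card J choose 2) * Acoef t n z J)"
    unfolding det_two_point sum_distrib_left
  proof (rule sum.cong[OF refl])
    fix J assume "J \<in> Pow {0..<n}"
    then have "J \<subseteq> {0..<n}" by auto
    from vdm_shift[OF this inj, of t] show "(\<Prod>i\<in>J. c i) * vdm n (\<lambda>i. if i \<in> J then t * z i else z i)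
      = vdm n z * ((\<Prod>i\<in>J. c i) * t ^ (card J choose 2) * Acoef t n z J)"
      unfolding Acoef_def by (simp add: ac_simps)
  qed
  have nz: "vdm n z \<noteq> 0"
  proof -
    have "z i - z j \<noteq> 0" if "j < i" "i < n" for i j
      using inj that by (auto dest: inj_onD)
    then show ?thesis unfolding vdm_def by (auto simp: prod_zero_iff)
  qed
  have "vdm n z * (\<Sum>J\<in>Pow {0..<n}. (\<Prod>i\<in>J. c i) * t ^ (card J choose 2) * Acoef t n z J)
      = vdm n z * ((\<Prod>i<n. d i) * det C)"
    unfolding E2[symmetric] E1 by (simp only: ac_simps)
  then show ?thesis using nz mult_left_cancel by blast
qed


lemma claim1_0:
  fixes z :: "nat \<Rightarrow> complex" and u t b :: complex
  assumes inj: "inj_on z {0..<n}" and b: "b = u * t ^ (n - 1)"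
    and nz: "\<And>i. i < n \<Longrightarrow> 1 - b * z i \<noteq> 0"
  shows "(\<Sum>J\<in>Pow {0..<n}. (\<Prod>i\<in>J. - u * ((1 - z i) / (1 - b * z i))) * t ^ (card J choose 2) * Acoef t n z J)
     = (\<Prod>i<n. 1 / (1 - b * z i)) * (\<Prod>k<n. (1 - u * t ^ k))"
proof -
  define C :: "complex mat" where "C = mat n n (\<lambda>(l,k). if l = k then 1 - u * t ^ k else if l = Suc k then u * t ^ k - b else 0)"
  have Cc: "C \<in> carrier_mat n n" unfolding C_def by auto
  have detC: "det C = (\<Prod>k<n. (1 - u * t ^ k))"
  proof -
    have "det C = prod_list (diag_mat C)"
      by (rule det_lower_triangular[OF _ Cc]) (auto simp: C_def)
    also have "diag_mat C = map (\<lambda>k. 1 - u * t ^ k) [0..<n]" unfolding C_def diag_mat_def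
      by (rule map_cong) auto
    also have "prod_list (map (\<lambda>k. 1 - u * t ^ k) [0..<n]) = prod (\<lambda>k. 1 - u * t ^ k) (set [0..<n])"
      by (rule prod.distinct_set_conv_list[symmetric]) simp
    finally show ?thesis by (simp add: lessThan_atLeast0)
  qed
  have ent: "(1 / (1 - b * z i)) * (\<Sum>l<n. z i ^ l * C $$ (l, k)) = z i ^ k + (- u * ((1 - z i) / (1 - b * z i))) * (t * z i) ^ k"
    if i: "i < n" and k: "k < n" for i k
  proof -
    have "(\<Sum>l<n. z i ^ l * C $$ (l, k)) = (\<Sum>l<n. z i ^ l * (if l = k then 1 - u * t ^ k else if l = Suc k then u * t ^ k - b else 0))"
      using k by (intro sum.cong refl) (auto simp: C_def)
    also have "\<dots> = z i ^ k * (1 - u * t ^ k) + (if Suc k < n then z i ^ Suc k * (u * t ^ k - b) else 0)"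
      by (rule lower_bidiag_sum[OF k])
    also have "\<dots> = z i ^ k * (1 - u * t ^ k) + z i ^ Suc k * (u * t ^ k - b)"
    proof (cases "Suc k < n")
      case False
      then have "k = n - 1" using k by simp
      then show ?thesis using b by simp
    qed simp
    finally have S: "(\<Sum>l<n. z i ^ l * C $$ (l, k)) = z i ^ k * (1 - u * t ^ k) + z i ^ Suc k * (u * t ^ k - b)" .
    show ?thesis unfolding S using nz[OF i]
      by (simp add: field_simps power_mult_distrib)
  qed
  show ?thesis using main0[OF inj Cc ent] unfolding detC .
qed

lemma claim2_0:
  fixes z :: "nat \<Rightarrow> complex" and t a :: complex
  assumes inj: "inj_on z {0..<n}"
    and nz: "\<And>i. i < n \<Longrightarrow> 1 - a * z i \<noteq> 0"
  shows "(\<Sum>J\<in>Pow {0..<n}. (\<Prod>i\<in>J. - 1 * ((1 - z i) / (1 - a * z i))) * t ^ (card J choose 2) * Acoef t n z J)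
     = (\<Prod>i<n. z i / (1 - a * z i)) * (\<Prod>k<n. (t ^ k - a))"
proof -
  define C :: "complex mat" where "C = mat n n (\<lambda>(l,k). if l = k then t ^ k - a else if Suc l = k then 1 - t ^ k else 0)"
  have Cc: "C \<in> carrier_mat n n" unfolding C_def by auto
  have detC: "det C = (\<Prod>k<n. (t ^ k - a))"
  proof -
    have "upper_triangular C" unfolding C_def upper_triangular_def by auto
    then have "det C = prod_list (diag_mat C)" using det_upper_triangular Cc by blast
    also have "diag_mat C = map (\<lambda>k. t ^ k - a) [0..<n]" unfolding C_def diag_mat_def
      by (rule map_cong) auto
    also have "prod_list (map (\<lambda>k. t ^ k - a) [0..<n]) = prod (\<lambda>k. t ^ k - a) (set [0..<n])"
      by (rule prod.distinct_set_conv_list[symmetric]) simp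
    finally show ?thesis by (simp add: lessThan_atLeast0)
  qed
  have ent: "(z i / (1 - a * z i)) * (\<Sum>l<n. z i ^ l * C $$ (l, k)) = z i ^ k + (- 1 * ((1 - z i) / (1 - a * z i))) * (t * z i) ^ k"
    if i: "i < n" and k: "k < n" for i k
  proof -
    have "(\<Sum>l<n. z i ^ l * C $$ (l, k)) = (\<Sum>l<n. z i ^ l * (if l = k then t ^ k - a else if Suc l = k then 1 - t ^ k else 0))"
      using k by (intro sum.cong refl) (auto simp: C_def)
    also have "\<dots> = z i ^ k * (t ^ k - a) + (if k > 0 then z i ^ (k - 1) * (1 - t ^ k) else 0)"
      by (rule bidiag_sum[OF k])
    finally have S0: "(\<Sum>l<n. z i ^ l * C $$ (l, k)) = z i ^ k * (t ^ k - a) + (if k > 0 then z i ^ (k - 1) * (1 - t ^ k) else 0)" .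
    have S1: "z i * (z i ^ k * (t ^ k - a) + (if k > 0 then z i ^ (k - 1) * (1 - t ^ k) else 0)) = z i ^ Suc k * (t ^ k - a) + z i ^ k * (1 - t ^ k)"
    proof (cases k)
      case (Suc k') 
      then show ?thesis by (simp add: algebra_simps)
    qed simp
    have S: "z i * (\<Sum>l<n. z i ^ l * C $$ (l, k)) = z i ^ Suc k * (t ^ k - a) + z i ^ k * (1 - t ^ k)"
      unfolding S0 S1 ..
    have "(z i / (1 - a * z i)) * (\<Sum>l<n. z i ^ l * C $$ (l, k)) = (z i * (\<Sum>l<n. z i ^ l * C $$ (l, k))) / (1 - a * z i)"
      by simp
    also have "\<dots> = (z i ^ Suc k * (t ^ k - a) + z i ^ k * (1 - t ^ k)) / (1 - a * z i)" unfolding S ..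
    also have "\<dots> = z i ^ k + (- 1 * ((1 - z i) / (1 - a * z i))) * (t * z i) ^ k" using nz[OF i]
      by (simp add: field_simps power_mult_distrib)
    finally show ?thesis .
  qed
  show ?thesis using main0[OF inj Cc ent] unfolding detC .
qed


lemma one_to_m: "{1..m} = Suc ` {0..<m}"
  by (simp add: image_Suc_atLeastLessThan atLeastLessThanSuc_atLeastAtMost)

lemma Pow_image_Suc: "Pow (Suc ` A) = image Suc ` Pow A"
  by (auto simp: subset_image_iff)

lemma prod_shift1: "(\<Prod>i=1..m. g i) = (\<Prod>i<m. g (Suc i))"
proof -
  have "prod g (Suc ` {0..<m}) = prod (g \<circ> Suc) {0..<m}" by (rule prod.reindex) simp
  then show ?thesis unfolding one_to_m by (simp add: lessThan_atLeast0)
qed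

lemma F_reindex:
  fixes x :: "nat \<Rightarrow> complex" and h :: "complex \<Rightarrow> complex"
  assumes H: "\<And>i. i \<in> {1..m} \<Longrightarrow> H_spec a' t (x i) = h (x i)"
  shows "F_spec a' t u m x = (\<Sum>J\<in>Pow {0..<m}. (\<Prod>i\<in>J. - u * h (x (Suc i))) * t ^ (card J choose 2) * Acoef t m (\<lambda>i. x (Suc i)) J)"
proof -
  have inj: "inj_on (image Suc) (Pow {0..<m})" by (auto simp: inj_on_def inj_image_eq_iff)
  have "F_spec a' t u m x = (\<Sum>I\<in>image Suc ` Pow {0..<m}.
        (- u) ^ card I * t ^ (card I choose 2)
        * (\<Prod>i\<in>I. \<Prod>j\<in>{1..m} - I. (t * x i - x j) / (x i - x j))
        * (\<Prod>i\<in>I. H_spec a' t (x i)))"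
    unfolding F_spec_def one_to_m Pow_image_Suc ..
  also have "\<dots> = (\<Sum>J\<in>Pow {0..<m}.
        (- u) ^ card (Suc ` J) * t ^ (card (Suc ` J) choose 2)
        * (\<Prod>i\<in>Suc ` J. \<Prod>j\<in>{1..m} - Suc ` J. (t * x i - x j) / (x i - x j))
        * (\<Prod>i\<in>Suc ` J. H_spec a' t (x i)))"
    by (rule sum.reindex[OF inj, unfolded comp_def])
  also have "\<dots> = (\<Sum>J\<in>Pow {0..<m}. (\<Prod>i\<in>J. - u * h (x (Suc i))) * t ^ (card J choose 2) * Acoef t m (\<lambda>i. x (Suc i)) J)"
  proof (rule sum.cong[OF refl])
    fix J assume J: "J \<in> Pow {0..<m}"
    have cJ: "card (Suc ` J) = card J" by (simp add: card_image)
    have d: "{1..m} - Suc ` J = Suc ` ({0..<m} - J)" unfolding one_to_m by (simp add: image_set_diff)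
    have A: "(\<Prod>i\<in>Suc ` J. \<Prod>j\<in>{1..m} - Suc ` J. (t * x i - x j) / (x i - x j)) = Acoef t m (\<lambda>i. x (Suc i)) J"
      unfolding d Acoef_def by (simp add: prod.reindex)
    have Hs: "(\<Prod>i\<in>Suc ` J. H_spec a' t (x i)) = (\<Prod>i\<in>J. h (x (Suc i)))"
    proof -
      have "(\<Prod>i\<in>Suc ` J. H_spec a' t (x i)) = (\<Prod>i\<in>J. H_spec a' t (x (Suc i)))" by (simp add: prod.reindex)
      also have "\<dots> = (\<Prod>i\<in>J. h (x (Suc i)))"
        using J by (intro prod.cong refl H) auto
      finally show ?thesis .
    qed
    have P: "(\<Prod>i\<in>J. - u * h (x (Suc i))) = (- u) ^ card J * (\<Prod>i\<in>J. h (x (Suc i)))"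
      by (simp only: prod.distrib prod_constant)
    show "(- u) ^ card (Suc ` J) * t ^ (card (Suc ` J) choose 2)
        * (\<Prod>i\<in>Suc ` J. \<Prod>j\<in>{1..m} - Suc ` J. (t * x i - x j) / (x i - x j))
        * (\<Prod>i\<in>Suc ` J. H_spec a' t (x i))
      = (\<Prod>i\<in>J. - u * h (x (Suc i))) * t ^ (card J choose 2) * Acoef t m (\<lambda>i. x (Suc i)) J"
      unfolding cJ A Hs P by (simp add: ac_simps)
  qed
  finally show ?thesis .
qed

lemma tprod: 
  fixes t a :: complex assumes "t \<noteq> 0"
  shows "(\<Prod>k<m. (t ^ k - a)) = t ^ (m choose 2) * (\<Prod>i=1..m. (1 - a * t powi (1 - int i)))"
proof (induction m)
  case 0 then show ?case by (simp add: numeral_2_eq_2)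
next
  case (Suc m)
  have "1 - a * t powi (1 - int (Suc m)) = 1 - a / t ^ m"
    by (simp add: power_int_minus divide_inverse)
  then have f: "t ^ m * (1 - a * t powi (1 - int (Suc m))) = t ^ m - a"
    using assms by (simp add: field_simps)
  have "(\<Prod>k<Suc m. (t ^ k - a)) = t ^ (m choose 2) * (\<Prod>i=1..m. (1 - a * t powi (1 - int i))) * (t ^ m * (1 - a * t powi (1 - int (Suc m))))"
    using Suc f by simp
  also have "\<dots> = t ^ (Suc m choose 2) * (\<Prod>i=1..Suc m. (1 - a * t powi (1 - int i)))"
    by (simp add: choose2_Suc power_add ac_simps)
  finally show ?case .
qed

theorem lemma3p2:
  fixes m :: nat and x :: "nat \<Rightarrow> complex" and u t a :: complex
  assumes distinct: "inj_on x {1..m}"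
    and t_nz: "t \<noteq> 0"
    and t_generic: "\<And>r. r \<ge> 1 \<Longrightarrow> t ^ r \<noteq> 1"
    and x_small: "\<And>i. i \<in> {1..m} \<Longrightarrow> norm (x i) < 1"
    and ux_small: "\<And>i. i \<in> {1..m} \<Longrightarrow> norm (u * t ^ (m - 1) * x i) < 1"
    and ax_small: "\<And>i. i \<in> {1..m} \<Longrightarrow> norm (a * x i) < 1"
  shows "F_spec (u * t ^ (m - 1)) t u m x
           = (\<Prod>i=1..m. (1 - u * t ^ (m - i)) / (1 - u * t ^ (m - 1) * x i))
         \<and> F_spec a t 1 m x
           = t ^ (m choose 2) * (\<Prod>i=1..m. x i)
             * (\<Prod>i=1..m. (1 - a * t powi (1 - int i)) / (1 - a * x i))"
proof
  define z where "z i = x (Suc i)" for i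
  have injz: "inj_on z {0..<m}"
  proof -
    have "inj_on x (Suc ` {0..<m})" using distinct by (simp only: one_to_m)
    then have "inj_on (x \<circ> Suc) {0..<m}" by (intro comp_inj_on) auto
    then show ?thesis unfolding z_def comp_def .
  qed
  define b where "b = u * t ^ (m - 1)"
  have Hb: "H_spec b t (x i) = (1 - x i) / (1 - b * x i)" if "i \<in> {1..m}" for i
    using H_spec_eq[OF t_generic x_small[OF that]] ux_small[OF that] unfolding b_def by simp
  have Ha: "H_spec a t (x i) = (1 - x i) / (1 - a * x i)" if "i \<in> {1..m}" for i
    using H_spec_eq[OF t_generic x_small[OF that] ax_small[OF that]] by simp
  have nzb: "1 - b * z i \<noteq> 0" if "i < m" for i
  proof -
    have "norm (b * z i) < 1" using ux_small[of "Suc i"] that unfolding b_def z_def by simp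
    then show ?thesis by auto
  qed
  have nza: "1 - a * z i \<noteq> 0" if "i < m" for i
  proof -
    have "norm (a * z i) < 1" using ax_small[of "Suc i"] that unfolding z_def by simp
    then show ?thesis by auto
  qed
  have "F_spec b t u m x = (\<Sum>J\<in>Pow {0..<m}. (\<Prod>i\<in>J. - u * ((1 - z i) / (1 - b * z i))) * t ^ (card J choose 2) * Acoef t m z J)"
    unfolding z_def by (rule F_reindex[where h="\<lambda>w. (1 - w) / (1 - b * w)"]) (rule Hb)
  also have "\<dots> = (\<Prod>i<m. 1 / (1 - b * z i)) * (\<Prod>k<m. (1 - u * t ^ k))"
    by (rule claim1_0[OF injz b_def nzb])
  also have "\<dots> = (\<Prod>i=1..m. (1 - u * t ^ (m - i)) / (1 - b * x i))"
  proof -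
    have r: "(\<Prod>k<m. (1 - u * t ^ k)) = (\<Prod>i=1..m. (1 - u * t ^ (m - i)))"
      by (rule prod.reindex_bij_witness[where i="\<lambda>i. m - i" and j="\<lambda>k. m - k"]) auto
    have q: "(\<Prod>i=1..m. 1 - b * x i) = (\<Prod>i<m. 1 - b * z i)"
      unfolding prod_shift1 z_def ..
    show ?thesis unfolding prod_dividef q r by simp
  qed
  finally show "F_spec (u * t ^ (m - 1)) t u m x
           = (\<Prod>i=1..m. (1 - u * t ^ (m - i)) / (1 - u * t ^ (m - 1) * x i))" unfolding b_def .
  have "F_spec a t 1 m x = (\<Sum>J\<in>Pow {0..<m}. (\<Prod>i\<in>J. - 1 * ((1 - z i) / (1 - a * z i))) * t ^ (card J choose 2) * Acoef t m z J)"
    unfolding z_def by (rule F_reindex[where h="\<lambda>w. (1 - w) / (1 - a * w)"]) (rule Ha)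
  also have "\<dots> = (\<Prod>i<m. z i / (1 - a * z i)) * (\<Prod>k<m. (t ^ k - a))"
    by (rule claim2_0[OF injz nza])
  also have "\<dots> = t ^ (m choose 2) * (\<Prod>i=1..m. x i) * (\<Prod>i=1..m. (1 - a * t powi (1 - int i)) / (1 - a * x i))"
  proof -
    have q: "(\<Prod>i=1..m. 1 - a * x i) = (\<Prod>i<m. 1 - a * z i)"
      unfolding prod_shift1 z_def ..
    have qx: "(\<Prod>i=1..m. x i) = (\<Prod>i<m. z i)"
      unfolding prod_shift1 z_def ..
    show ?thesis unfolding prod_dividef q qx tprod[OF t_nz, of a m] by (simp add: ac_simps)
  qed
  finally show "F_spec a t 1 m x = t ^ (m choose 2) * (\<Prod>i=1..m. x i)
             * (\<Prod>i=1..m. (1 - a * t powi (1 - int i)) / (1 - a * x i))" .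
qed

end
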